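(* Let $A$ be a C*-algebra and let $S\subseteq A$ be $A$-invariant, i.e. $[SA]=[AS]$. Then $$\mathrm{Ann}^L_A(S)=\mathrm{Ann}^R_A(S)=\mathrm{Ann}^L_A(\langle S\rangle_A)=\mathrm{Ann}^R_A(\langle S\rangle_A).$$
   Context: For subsets $S,T$ of a C*-algebra $A$: $[S]$ denotes the closed linear span of $S$; $ST=\{st:s\in S,t\in T\}$; $\langle S\rangle_A=[ASA]$ is the closed two-sided ideal generated by $S$. The left annihilator is $\mathrm{Ann}^L_A(S)=\{x\in A: xs=0\ \forall s\in S\}$ and the right annihilator is $\mathrm{Ann}^R_A(S)=\{x\in A: sx=0\ \forall s\in S\}$. A subset $S\subseteq A$ is called $A$-invariant if $[SA]=[AS]$. *)

theory Defs
  imports "HOL-Analysis.Analysis"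
begin

class cstar_algebra = real_normed_algebra + banach +
  fixes scaleC :: "complex \<Rightarrow> 'a \<Rightarrow> 'a"
    and cstar :: "'a \<Rightarrow> 'a"
  assumes scaleC_add_right: "scaleC a (x + y) = scaleC a x + scaleC a y"
    and scaleC_add_left: "scaleC (a + b) x = scaleC a x + scaleC b x"
    and scaleC_scaleC: "scaleC a (scaleC b x) = scaleC (a * b) x"
    and scaleC_one: "scaleC 1 x = x"
    and scaleR_scaleC: "scaleR r x = scaleC (complex_of_real r) x"
    and norm_scaleC: "norm (scaleC a x) = cmod a * norm x"
    and mult_scaleC_left: "scaleC a x * y = scaleC a (x * y)"
    and mult_scaleC_right: "x * scaleC a y = scaleC a (x * y)"
    and cstar_cstar: "cstar (cstar x) = x"
    and cstar_add: "cstar (x + y) = cstar x + cstar y"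
    and cstar_scaleC: "cstar (scaleC a x) = scaleC (cnj a) (cstar x)"
    and cstar_mult: "cstar (x * y) = cstar y * cstar x"
    and cstar_identity: "norm (cstar x * x) = (norm x)^2"

definition cspan :: "'a::cstar_algebra set \<Rightarrow> 'a set" where
  "cspan S = {x. \<exists>F c. finite F \<and> F \<subseteq> S \<and> x = (\<Sum>s\<in>F. scaleC (c s) s)}"

definition clspan :: "'a::cstar_algebra set \<Rightarrow> 'a set" where
  "clspan S = closure (cspan S)"

definition setmul :: "'a::times set \<Rightarrow> 'a set \<Rightarrow> 'a set" where
  "setmul S T = {s * t | s t. s \<in> S \<and> t \<in> T}"

text \<open>Closed two-sided ideal generated by S: [ASA], with A = UNIV.\<close>
definition ideal_gen :: "'a::cstar_algebra set \<Rightarrow> 'a set" where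
  "ideal_gen S = clspan (setmul (setmul UNIV S) UNIV)"

definition annL :: "'a::{times,zero} set \<Rightarrow> 'a set" where
  "annL S = {x. \<forall>s\<in>S. x * s = 0}"

definition annR :: "'a::{times,zero} set \<Rightarrow> 'a set" where
  "annR S = {x. \<forall>s\<in>S. s * x = 0}"

definition invariant :: "'a::cstar_algebra set \<Rightarrow> bool" where
  "invariant S \<longleftrightarrow> clspan (setmul S UNIV) = clspan (setmul UNIV S)"

end

theory Submission
  imports Defs
begin

lemma cstar_zero: "cstar (0::'a::cstar_algebra) = 0"
proof -
  have "cstar (0::'a) = cstar (0 + 0)" by simp
  also have "... = cstar 0 + cstar 0" by (rule cstar_add)
  finally show ?thesis by simp
qed

lemma zero_of_star_mult: fixes z :: "'a::cstar_algebra"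
  assumes "cstar z * z = 0" shows "z = 0"
proof -
  have "(norm z)^2 = 0" using cstar_identity[of z] assms by simp
  thus ?thesis by simp
qed

lemma zero_of_mult_star: fixes z :: "'a::cstar_algebra"
  assumes "z * cstar z = 0" shows "z = 0"
proof -
  have "cstar z = 0" using zero_of_star_mult[of "cstar z"] assms by (simp add: cstar_cstar)
  hence "cstar (cstar z) = 0" by (simp add: cstar_zero)
  thus ?thesis by (simp add: cstar_cstar)
qed

lemma sa_zero3: fixes w :: "'a::cstar_algebra"
  assumes sa: "cstar w = w" and "w * (w * w) = 0" shows "w = 0"
proof -
  have "cstar (w*w) * (w*w) = 0" using assms by (simp add: cstar_mult mult.assoc)
  hence "w * w = 0" by (rule zero_of_star_mult)
  hence "cstar w * w = 0" using sa by simp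
  thus ?thesis by (rule zero_of_star_mult)
qed

lemma sa_zero2: fixes w :: "'a::cstar_algebra"
  assumes sa: "cstar w = w" and "w * w = 0" shows "w = 0"
proof -
  have "cstar w * w = 0" using assms by simp
  thus ?thesis by (rule zero_of_star_mult)
qed

lemma scaleC_zero: "scaleC a (0::'a::cstar_algebra) = 0"
proof -
  have "scaleC a (0::'a) = scaleC a (0 + 0)" by simp
  also have "... = scaleC a 0 + scaleC a 0" by (rule scaleC_add_right)
  finally show ?thesis by simp
qed

lemma in_clspan: "y \<in> T \<Longrightarrow> y \<in> clspan T"
proof -
  assume "y \<in> T"
  hence "y \<in> cspan T" unfolding cspan_def
    by (intro CollectI exI[of _ "{y}"] exI[of _ "\<lambda>_. 1"]) (simp add: scaleC_one)
  thus ?thesis unfolding clspan_def using closure_subset by blast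
qed

lemma clspan_left: fixes x :: "'a::cstar_algebra"
  assumes "\<forall>y\<in>T. x * y = 0" shows "\<forall>y\<in>clspan T. x * y = 0"
proof -
  have "cspan T \<subseteq> {y. x * y = 0}"
  proof
    fix y assume "y \<in> cspan T"
    then obtain F c where F: "finite F" "F \<subseteq> T" "y = (\<Sum>s\<in>F. scaleC (c s) s)"
      unfolding cspan_def by blast
    have "x * y = (\<Sum>s\<in>F. x * scaleC (c s) s)" using F by (simp add: sum_distrib_left)
    also have "... = (\<Sum>s\<in>F. scaleC (c s) (x * s))" by (simp add: mult_scaleC_right)
    also have "... = 0" using F assms
    proof (intro sum.neutral ballI)
      fix s assume "s \<in> F" hence "x * s = 0" using F assms by blast
      thus "scaleC (c s) (x * s) = 0" by (simp add: scaleC_zero)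
    qed
    finally show "y \<in> {y. x * y = 0}" by simp
  qed
  moreover have "closed {y. x * y = 0}"
    by (intro closed_Collect_eq continuous_intros)
  ultimately have "closure (cspan T) \<subseteq> {y. x * y = 0}" by (rule closure_minimal)
  thus ?thesis unfolding clspan_def by blast
qed

lemma clspan_right: fixes x :: "'a::cstar_algebra"
  assumes "\<forall>y\<in>T. y * x = 0" shows "\<forall>y\<in>clspan T. y * x = 0"
proof -
  have "cspan T \<subseteq> {y. y * x = 0}"
  proof
    fix y assume "y \<in> cspan T"
    then obtain F c where F: "finite F" "F \<subseteq> T" "y = (\<Sum>s\<in>F. scaleC (c s) s)"
      unfolding cspan_def by blast
    have "y * x = (\<Sum>s\<in>F. scaleC (c s) s * x)" using F by (simp add: sum_distrib_right)
    also have "... = (\<Sum>s\<in>F. scaleC (c s) (s * x))" by (simp add: mult_scaleC_left)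
    also have "... = 0" using F assms
    proof (intro sum.neutral ballI)
      fix s assume "s \<in> F" hence "s * x = 0" using F assms by blast
      thus "scaleC (c s) (s * x) = 0" by (simp add: scaleC_zero)
    qed
    finally show "y \<in> {y. y * x = 0}" by simp
  qed
  moreover have "closed {y. y * x = 0}"
    by (intro closed_Collect_eq continuous_intros)
  ultimately have "closure (cspan T) \<subseteq> {y. y * x = 0}" by (rule closure_minimal)
  thus ?thesis unfolding clspan_def by blast
qed

lemma inv_L: fixes S :: "'a::cstar_algebra set"
  assumes inv: "invariant S" and x: "x \<in> annL S" and s: "s \<in> S"
  shows "x * (a * s) = 0"
proof -
  have "\<forall>y\<in>setmul S UNIV. x * y = 0" using x unfolding setmul_def annL_def
    by (auto simp flip: mult.assoc)
  hence "\<forall>y\<in>clspan (setmul UNIV S). x * y = 0" using inv clspan_left unfolding invariant_def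
    by metis
  moreover have "a * s \<in> clspan (setmul UNIV S)" using s by (intro in_clspan) (auto simp: setmul_def)
  ultimately show ?thesis by blast
qed

lemma inv_R: fixes S :: "'a::cstar_algebra set"
  assumes inv: "invariant S" and x: "x \<in> annR S" and s: "s \<in> S"
  shows "(s * a) * x = 0"
proof -
  have "\<forall>y\<in>setmul UNIV S. y * x = 0" using x unfolding setmul_def annR_def
    by (auto simp: mult.assoc)
  hence "\<forall>y\<in>clspan (setmul S UNIV). y * x = 0" using inv clspan_right unfolding invariant_def
    by metis
  moreover have "s * a \<in> clspan (setmul S UNIV)" using s by (intro in_clspan) (auto simp: setmul_def)
  ultimately show ?thesis by blast
qed

lemma LR: fixes S :: "'a::cstar_algebra set"
  assumes inv: "invariant S" shows "annL S \<subseteq> annR S"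
proof
  fix x assume x: "x \<in> annL S"
  { fix s assume s: "s \<in> S"
    define z where "z = s * x"
    have h: "x * ((cstar x * cstar s) * s) = 0" by (rule inv_L[OF inv x s])
    have "cstar z * z * (cstar z * z) = (cstar x * cstar s * s) * (x * ((cstar x * cstar s) * s)) * x"
      unfolding z_def by (simp add: cstar_mult mult.assoc)
    also have "... = 0" using h by simp
    finally have "cstar z * z * (cstar z * z) = 0" .
    moreover have "cstar (cstar z * z) = cstar z * z" by (simp add: cstar_mult cstar_cstar)
    ultimately have "cstar z * z = 0" using sa_zero2 by blast
    hence "z = 0" by (rule zero_of_star_mult)
    hence "s * x = 0" unfolding z_def . }
  thus "x \<in> annR S" unfolding annR_def by blast
qed

lemma RL: fixes S :: "'a::cstar_algebra set"
  assumes inv: "invariant S" shows "annR S \<subseteq> annL S"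
proof
  fix x assume x: "x \<in> annR S"
  { fix s assume s: "s \<in> S"
    define z where "z = x * s"
    have h: "(s * (cstar s * cstar x)) * x = 0" by (rule inv_R[OF inv x s])
    have "z * cstar z * (z * cstar z) = x * ((s * (cstar s * cstar x)) * x) * s * cstar s * cstar x"
      unfolding z_def by (simp add: cstar_mult mult.assoc)
    also have "... = 0" using h by simp
    finally have "z * cstar z * (z * cstar z) = 0" .
    moreover have "cstar (z * cstar z) = z * cstar z" by (simp add: cstar_mult cstar_cstar)
    ultimately have "z * cstar z = 0" using sa_zero2 by blast
    hence "z = 0" by (rule zero_of_mult_star)
    hence "x * s = 0" unfolding z_def . }
  thus "x \<in> annL S" unfolding annL_def by blast
qed

lemma L_I: fixes S :: "'a::cstar_algebra set"
  assumes inv: "invariant S" shows "annL S \<subseteq> annL (ideal_gen S)"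
proof
  fix x assume x: "x \<in> annL S"
  have "\<forall>y\<in>setmul (setmul UNIV S) UNIV. x * y = 0"
  proof
    fix y assume "y \<in> setmul (setmul UNIV S) UNIV"
    then obtain a s b where y: "y = a * s * b" "s \<in> S" unfolding setmul_def by blast
    have "x * (a * s) = 0" by (rule inv_L[OF inv x y(2)])
    hence "x * (a * s) * b = 0" by simp
    thus "x * y = 0" using y(1) by (simp add: mult.assoc)
  qed
  thus "x \<in> annL (ideal_gen S)" using clspan_left unfolding annL_def ideal_gen_def by blast
qed

lemma R_I: fixes S :: "'a::cstar_algebra set"
  assumes inv: "invariant S" shows "annR S \<subseteq> annR (ideal_gen S)"
proof
  fix x assume x: "x \<in> annR S"
  have "\<forall>y\<in>setmul (setmul UNIV S) UNIV. y * x = 0"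
  proof
    fix y assume "y \<in> setmul (setmul UNIV S) UNIV"
    then obtain a s b where y: "y = a * s * b" "s \<in> S" unfolding setmul_def by blast
    have "(s * b) * x = 0" by (rule inv_R[OF inv x y(2)])
    hence "a * ((s * b) * x) = 0" by simp
    thus "y * x = 0" using y(1) by (simp add: mult.assoc)
  qed
  thus "x \<in> annR (ideal_gen S)" using clspan_right unfolding annR_def ideal_gen_def by blast
qed

lemma I_L: fixes S :: "'a::cstar_algebra set"
  shows "annL (ideal_gen S) \<subseteq> annL S"
proof
  fix x assume x: "x \<in> annL (ideal_gen S)"
  { fix s assume s: "s \<in> S"
    define z where "z = x * s"
    define w where "w = z * cstar z"
    have h: "x * ((s * cstar s * cstar x * x) * s * (cstar s * cstar x * x * s * cstar s * cstar x)) = 0"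
      using x s unfolding annL_def ideal_gen_def
      by (auto intro!: in_clspan simp: setmul_def)
    have "w * (w * w) = x * ((s * cstar s * cstar x * x) * s * (cstar s * cstar x * x * s * cstar s * cstar x))"
      unfolding w_def z_def by (simp add: cstar_mult mult.assoc)
    hence "w * (w * w) = 0" using h by simp
    moreover have "cstar w = w" unfolding w_def by (simp add: cstar_mult cstar_cstar)
    ultimately have "w = 0" using sa_zero3 by blast
    hence "z = 0" unfolding w_def by (rule zero_of_mult_star)
    hence "x * s = 0" unfolding z_def . }
  thus "x \<in> annL S" unfolding annL_def by blast
qed

lemma I_R: fixes S :: "'a::cstar_algebra set"
  shows "annR (ideal_gen S) \<subseteq> annR S"
proof
  fix x assume x: "x \<in> annR (ideal_gen S)"
  { fix s assume s: "s \<in> S"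
    define z where "z = s * x"
    define w where "w = cstar z * z"
    have h: "((cstar x * cstar s) * s * (x * cstar x * cstar s * s * x * cstar x * cstar s * s)) * x = 0"
      using x s unfolding annR_def ideal_gen_def
      by (auto intro!: in_clspan simp: setmul_def)
    have "w * (w * w) = ((cstar x * cstar s) * s * (x * cstar x * cstar s * s * x * cstar x * cstar s * s)) * x"
      unfolding w_def z_def by (simp add: cstar_mult mult.assoc)
    hence "w * (w * w) = 0" using h by simp
    moreover have "cstar w = w" unfolding w_def by (simp add: cstar_mult cstar_cstar)
    ultimately have "w = 0" using sa_zero3 by blast
    hence "z = 0" unfolding w_def by (rule zero_of_star_mult)
    hence "s * x = 0" unfolding z_def . }
  thus "x \<in> annR S" unfolding annR_def by blast
qed

theorem proposition2p5:
  fixes S :: "'a::cstar_algebra set"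
  assumes "invariant S"
  shows "annL S = annR S \<and> annR S = annL (ideal_gen S) \<and> annL (ideal_gen S) = annR (ideal_gen S)"
proof -
  have 1: "annL S = annR S" using LR[OF assms] RL[OF assms] by blast
  have 2: "annL S = annL (ideal_gen S)" using L_I[OF assms] I_L[of S] by blast
  have 3: "annR S = annR (ideal_gen S)" using R_I[OF assms] I_R[of S] by blast
  show ?thesis using 1 2 3 by simp
qed

end
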